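(* Let $d$ and $m$ be positive integers and let $P$ be a finite poset such that $|P|> m$ and every subset $S$ of $P$ with $|S|>m$ satisfies $\mathrm{comp}(S)\geq |S|d$. Then there exists a function \[f:\binom{P}{\leq |P|/(2d+1)}\to\binom{P}{\leq m}\] such that for every antichain $I\subseteq P$ there is a subset $T\subseteq I$ with $|T|\leq |P|/(2d+1)$, $T\cap f(T)=\emptyset$ and $I\subseteq T\cup f(T)$.
   Context: For a set $X$ and real $j$, $\binom{X}{\leq j}$ denotes the family of all subsets of $X$ of cardinality at most $j$. $\mathrm{comp}(S)$ is the number of unordered pairs of distinct comparable elements of $S$. An antichain is a set of pairwise incomparable elements. *)

theory Defs
  imports Complex_Main
begin

definition comp :: "'a::order set \<Rightarrow> nat" where
  "comp S = card {{x, y} | x y. x \<in> S \<and> y \<in> S \<and> x \<noteq> y \<and> (x \<le> y \<or> y \<le> x)}"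

definition antichain :: "'a::order set \<Rightarrow> bool" where
  "antichain S \<longleftrightarrow> (\<forall>x\<in>S. \<forall>y\<in>S. x \<noteq> y \<longrightarrow> \<not> (x \<le> y) \<and> \<not> (y \<le> x))"

definition subsets_le :: "'a set \<Rightarrow> real \<Rightarrow> 'a set set" where
  "subsets_le X j = {A. A \<subseteq> X \<and> real (card A) \<le> j}"

end

theory Submission imports Defs begin

definition nbrs :: "'a::order set \<Rightarrow> 'a \<Rightarrow> 'a set" where
  "nbrs A v = {u\<in>A. u \<noteq> v \<and> (u \<le> v \<or> v \<le> u)}"
definition deg :: "'a::order set \<Rightarrow> 'a \<Rightarrow> nat" where
  "deg A v = card (nbrs A v)"
definition pick :: "'a::order set \<Rightarrow> 'a" where
  "pick A = (SOME v. v \<in> A \<and> (\<forall>u\<in>A. deg A u \<le> deg A v))"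

lemma pick_prop:
  assumes "finite A" "A \<noteq> {}"
  shows "pick A \<in> A \<and> (\<forall>u\<in>A. deg A u \<le> deg A (pick A))"
proof -
  have "Max (deg A ` A) \<in> deg A ` A" using assms by simp
  then obtain v where v: "v \<in> A" "deg A v = Max (deg A ` A)" by auto
  have "\<forall>u\<in>A. deg A u \<le> deg A v" using v assms by simp
  with v(1) have "\<exists>v. v \<in> A \<and> (\<forall>u\<in>A. deg A u \<le> deg A v)" by blast
  then show ?thesis unfolding pick_def by (rule someI_ex)
qed

lemma dec1: "\<not> card A \<le> m \<Longrightarrow> card (A - insert (pick A) X) < card A"
proof -
  assume "\<not> card A \<le> m"
  then have f: "finite A" "A \<noteq> {}" by (auto intro: card_ge_0_finite)
  then have p: "pick A \<in> A" using pick_prop by blast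
  show ?thesis using f p by (intro psubset_card_mono) auto
qed

lemma dec2: "\<not> card A \<le> m \<Longrightarrow> card (A - {pick A}) < card A"
  using dec1[of A m "{}"] by simp

function run :: "nat \<Rightarrow> 'a::order set \<Rightarrow> 'a set \<Rightarrow> 'a set \<times> 'a set" where
  "run m J A = (if card A \<le> m then ({}, A) else
     if pick A \<in> J then
       (insert (pick A) (fst (run m J (A - insert (pick A) (nbrs A (pick A))))),
        snd (run m J (A - insert (pick A) (nbrs A (pick A)))))
     else run m J (A - {pick A}))"
  by pat_completeness auto
termination
  apply (relation "measure (\<lambda>(m,J,A). card A)")
  by (auto simp: dec1 dec2)

declare run.simps[simp del]

lemma run_snd: "snd (run m J A) \<subseteq> A \<and> card (snd (run m J A)) \<le> m"
proof (induction m J A rule: run.induct)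
  case (1 m J A)
  show ?case
  proof (cases "card A \<le> m")
    case True then show ?thesis by (unfold run.simps[of m J A]) simp
  next
    case False
    show ?thesis
    proof (cases "pick A \<in> J")
      case True
      with False "1.IH" show ?thesis by (unfold run.simps[of m J A]) auto
    next
      case F2: False
      with False "1.IH" show ?thesis by (unfold run.simps[of m J A]) auto
    qed
  qed
qed

lemma run_fst: "fst (run m J A) \<subseteq> A \<inter> J"
proof (induction m J A rule: run.induct)
  case (1 m J A)
  show ?case
  proof (cases "card A \<le> m")
    case True then show ?thesis by (unfold run.simps[of m J A]) simp
  next
    case False
    then have fA: "finite A" "A \<noteq> {}" by (auto intro: card_ge_0_finite)
    then have pA: "pick A \<in> A" using pick_prop by blast
    show ?thesis
    proof (cases "pick A \<in> J")
      case True
      with False "1.IH" pA show ?thesis by (unfold run.simps[of m J A]) auto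
    next
      case F2: False
      with False "1.IH" show ?thesis by (unfold run.simps[of m J A]) auto
    qed
  qed
qed

lemma run_disj: "fst (run m J A) \<inter> snd (run m J A) = {}"
proof (induction m J A rule: run.induct)
  case (1 m J A)
  show ?case
  proof (cases "card A \<le> m")
    case True then show ?thesis by (unfold run.simps[of m J A]) simp
  next
    case False
    then have fA: "finite A" "A \<noteq> {}" by (auto intro: card_ge_0_finite)
    then have pA: "pick A \<in> A" using pick_prop by blast
    show ?thesis
    proof (cases "pick A \<in> J")
      case True
      with False "1.IH" run_snd[of m J "A - insert (pick A) (nbrs A (pick A))"] show ?thesis by (unfold run.simps[of m J A]) auto
    next
      case F2: False
      with False "1.IH" show ?thesis by (unfold run.simps[of m J A]) auto
    qed
  qed
qed

lemma run_cover: "antichain J \<Longrightarrow> J \<inter> A \<subseteq> fst (run m J A) \<union> snd (run m J A)"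
proof (induction m J A rule: run.induct)
  case (1 m J A)
  show ?case
  proof (cases "card A \<le> m")
    case True then show ?thesis by (unfold run.simps[of m J A]) simp
  next
    case False
    then have fA: "finite A" "A \<noteq> {}" by (auto intro: card_ge_0_finite)
    then have pA: "pick A \<in> A" using pick_prop by blast
    show ?thesis
    proof (cases "pick A \<in> J")
      case True
      have "J \<inter> A \<subseteq> insert (pick A) (J \<inter> (A - insert (pick A) (nbrs A (pick A))))"
        using "1.prems" True unfolding antichain_def nbrs_def by blast
      with False True "1.IH" "1.prems" show ?thesis by (unfold run.simps[of m J A]) auto
    next
      case F2: False
      with False "1.IH" "1.prems" show ?thesis by (unfold run.simps[of m J A]) auto
    qed
  qed
qed

lemma run_guide: "\<forall>K. K \<inter> A = fst (run m J A) \<longrightarrow> snd (run m K A) = snd (run m J A)"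
proof (induction m J A rule: run.induct)
  case (1 m J A)
  show ?case
  proof (cases "card A \<le> m")
    case True then show ?thesis by (simp add: run.simps[of m _ A])
  next
    case False
    then have fA: "finite A" "A \<noteq> {}" by (auto intro: card_ge_0_finite)
    then have pA: "pick A \<in> A" using pick_prop by blast
    show ?thesis
    proof (cases "pick A \<in> J")
      case True
      show ?thesis
      proof (intro allI impI)
        fix K assume K: "K \<inter> A = fst (run m J A)"
        define A' where "A' = A - insert (pick A) (nbrs A (pick A))"
        have e: "fst (run m J A) = insert (pick A) (fst (run m J A'))" using False True
          unfolding A'_def by (subst run.simps) simp
        have pK: "pick A \<in> K" using K e pA by blast
        have sub: "fst (run m J A') \<subseteq> A'" using run_fst[of m J A'] by blast
        have pA': "pick A \<notin> A'" unfolding A'_def by blast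
        have KA': "K \<inter> A' = fst (run m J A')"
        proof -
          have "K \<inter> A' = (K \<inter> A) \<inter> A'" unfolding A'_def by blast
          also have "\<dots> = insert (pick A) (fst (run m J A')) \<inter> A'" using K e by simp
          also have "\<dots> = fst (run m J A')" using sub pA' by blast
          finally show ?thesis .
        qed
        have IH: "snd (run m K A') = snd (run m J A')"
          using "1.IH"(1)[OF False True] KA' unfolding A'_def by blast
        have s1: "snd (run m K A) = snd (run m K A')" using False pK
          unfolding A'_def by (subst run.simps) simp
        have s2: "snd (run m J A) = snd (run m J A')" using False True
          unfolding A'_def by (subst run.simps) simp
        show "snd (run m K A) = snd (run m J A)" using s1 s2 IH by simp
      qed
    next
      case F2: False
      show ?thesis
      proof (intro allI impI)
        fix K assume K: "K \<inter> A = fst (run m J A)"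
        define A' where "A' = A - {pick A}"
        have e: "fst (run m J A) = fst (run m J A')" using False F2
          unfolding A'_def by (subst run.simps) simp
        have sub: "fst (run m J A') \<subseteq> A'" using run_fst[of m J A'] by blast
        have pK: "pick A \<notin> K" using K e sub pA unfolding A'_def by blast
        have KA': "K \<inter> A' = fst (run m J A')"
        proof -
          have "K \<inter> A' = K \<inter> A" using pK unfolding A'_def by blast
          then show ?thesis using K e by simp
        qed
        have IH: "snd (run m K A') = snd (run m J A')"
          using "1.IH" False F2 KA' unfolding A'_def by blast
        have s1: "snd (run m K A) = snd (run m K A')" using False pK
          unfolding A'_def by (subst run.simps) simp
        have s2: "snd (run m J A) = snd (run m J A')" using False F2
          unfolding A'_def by (subst run.simps) simp
        show "snd (run m K A) = snd (run m J A)" using s1 s2 IH by simp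
      qed
    qed
  qed
qed

lemma deg_big:
  fixes A :: "'a::order set"
  assumes fin: "finite A" and pos: "card A > 0" and cmp: "comp A \<ge> card A * d"
  shows "deg A (pick A) \<ge> 2 * d"
proof -
  have ne: "A \<noteq> {}" using pos by auto
  define L where "L = {(x,y). x \<in> A \<and> y \<in> A \<and> x < y}"
  have finL: "finite L"
    by (rule finite_subset[of _ "A \<times> A"]) (auto simp: L_def fin)
  have c1: "comp A \<le> card L"
  proof -
    have "{{x, y} | x y. x \<in> A \<and> y \<in> A \<and> x \<noteq> y \<and> (x \<le> y \<or> y \<le> x)} \<subseteq> (\<lambda>(x,y). {x,y}) ` L"
    proof
      fix e assume "e \<in> {{x, y} | x y. x \<in> A \<and> y \<in> A \<and> x \<noteq> y \<and> (x \<le> y \<or> y \<le> x)}"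
      then obtain x y where xy: "e = {x,y}" "x \<in> A" "y \<in> A" "x \<noteq> y" "x \<le> y \<or> y \<le> x" by blast
      show "e \<in> (\<lambda>(x,y). {x,y}) ` L"
      proof (cases "x < y")
        case True then have "(x,y) \<in> L" using xy by (auto simp: L_def)
        then show ?thesis using xy by force
      next
        case False then have "y < x" using xy by auto
        then have "(y,x) \<in> L" using xy by (auto simp: L_def)
        moreover have "e = (\<lambda>(x,y). {x,y}) (y,x)" using xy by auto
        ultimately show ?thesis by blast
      qed
    qed
    then have "comp A \<le> card ((\<lambda>(x,y). {x,y}) ` L)"
      unfolding comp_def using finL by (intro card_mono) auto
    also have "\<dots> \<le> card L" using finL by (rule card_image_le)
    finally show ?thesis .
  qed
  have c2: "card L = (\<Sum>x\<in>A. card {y\<in>A. x<y})"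
  proof -
    have "L = Sigma A (\<lambda>x. {y\<in>A. x<y})" by (auto simp: L_def)
    then show ?thesis using fin by (simp add: card_SigmaI)
  qed
  have c3: "card L = (\<Sum>y\<in>A. card {x\<in>A. x<y})"
  proof -
    have "L = (\<lambda>(y,x). (x,y)) ` Sigma A (\<lambda>y. {x\<in>A. x<y})" by (auto simp: L_def image_iff)
    moreover have "inj_on (\<lambda>(y,x). (x,y)) (Sigma A (\<lambda>y. {x\<in>A. x<y}))" by (auto simp: inj_on_def)
    ultimately have "card L = card (Sigma A (\<lambda>y. {x\<in>A. x<y}))" by (simp add: card_image)
    then show ?thesis using fin by (simp add: card_SigmaI)
  qed
  have ds: "deg A v = card {y\<in>A. v<y} + card {x\<in>A. x<v}" for v
  proof -
    have "nbrs A v = {y\<in>A. v<y} \<union> {x\<in>A. x<v}" by (auto simp: nbrs_def less_le)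
    moreover have "{y\<in>A. v<y} \<inter> {x\<in>A. x<v} = {}" by auto
    ultimately show ?thesis unfolding deg_def using fin by (simp add: card_Un_disjoint)
  qed
  have "(\<Sum>v\<in>A. deg A v) = 2 * card L" using c2 c3 ds by (simp add: sum.distrib)
  also have "\<dots> \<ge> 2 * (card A * d)" using c1 cmp by linarith
  finally have lo: "2 * (card A * d) \<le> (\<Sum>v\<in>A. deg A v)" .
  have "(\<Sum>v\<in>A. deg A v) \<le> card A * deg A (pick A)"
    using pick_prop[OF fin ne] sum_bounded_above[of A "deg A" "deg A (pick A)"] by simp
  with lo have "card A * (2 * d) \<le> card A * deg A (pick A)" by (metis le_trans mult.commute mult.left_commute)
  then show ?thesis using pos by simp
qed

lemma run_size:
  fixes P :: "'a::order set"
  shows "finite P \<Longrightarrow> (\<forall>S. S \<subseteq> P \<and> card S > m \<longrightarrow> comp S \<ge> card S * d) \<Longrightarrow> A \<subseteq> P \<Longrightarrow>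
     card (fst (run m J A)) * (2*d+1) \<le> card A"
proof (induction m J A rule: run.induct)
  case (1 m J A)
  show ?case
  proof (cases "card A \<le> m")
    case True then show ?thesis by (simp add: run.simps[of m J A])
  next
    case False
    then have fA: "finite A" "A \<noteq> {}" by (auto intro: card_ge_0_finite)
    then have pA: "pick A \<in> A" using pick_prop by blast
    show ?thesis
    proof (cases "pick A \<in> J")
      case True
      define A' where "A' = A - insert (pick A) (nbrs A (pick A))"
      have e: "fst (run m J A) = insert (pick A) (fst (run m J A'))" using False True
        unfolding A'_def by (subst run.simps) simp
      have IH: "card (fst (run m J A')) * (2*d+1) \<le> card A'"
        using "1.IH"(1)[OF False True] "1.prems" unfolding A'_def by blast
      have cmp: "comp A \<ge> card A * d" using "1.prems" False by auto
      have dg: "deg A (pick A) \<ge> 2 * d" using deg_big[OF fA(1) _ cmp] False by auto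
      have sub: "insert (pick A) (nbrs A (pick A)) \<subseteq> A" using pA by (auto simp: nbrs_def)
      have fn: "finite (nbrs A (pick A))" using fA by (auto simp: nbrs_def)
      have ci: "card (insert (pick A) (nbrs A (pick A))) = Suc (deg A (pick A))"
        using fn unfolding deg_def by (simp add: nbrs_def)
      have cA': "card A' = card A - Suc (deg A (pick A))"
        unfolding A'_def using card_Diff_subset[OF finite_subset[OF sub fA(1)] sub] ci by simp
      have le: "Suc (deg A (pick A)) \<le> card A" using card_mono[OF fA(1) sub] ci by simp
      have "card (fst (run m J A)) \<le> Suc (card (fst (run m J A')))"
        unfolding e by (simp add: card_insert_le_m1 card_insert_if)
      then have "card (fst (run m J A)) * (2*d+1) \<le> card (fst (run m J A')) * (2*d+1) + (2*d+1)"
        by (metis add.commute mult_Suc mult_le_mono1)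
      also have "\<dots> \<le> card A' + (2*d+1)" using IH by simp
      also have "\<dots> \<le> card A" using cA' le dg by simp
      finally show ?thesis .
    next
      case F2: False
      have e: "fst (run m J A) = fst (run m J (A - {pick A}))" using False F2
        by (subst run.simps) simp
      have IH: "card (fst (run m J (A - {pick A}))) * (2*d+1) \<le> card (A - {pick A})"
        using "1.IH" False F2 "1.prems" by blast
      have "card (A - {pick A}) \<le> card A" using fA by (simp add: card_Diff1_le)
      then show ?thesis using e IH by simp
    qed
  qed
qed

theorem mainTheorem13:
  fixes P :: "'a::order set" and d m :: nat
  assumes "d > 0" and "m > 0"
    and "finite P"
    and "card P > m"
    and "\<forall>S. S \<subseteq> P \<and> card S > m \<longrightarrow> comp S \<ge> card S * d"
  shows "\<exists>f. (\<forall>T \<in> subsets_le P (real (card P) / (2 * real d + 1)). f T \<in> subsets_le P (real m))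
          \<and> (\<forall>I. I \<subseteq> P \<and> antichain I \<longrightarrow>
               (\<exists>T. T \<subseteq> I \<and> real (card T) \<le> real (card P) / (2 * real d + 1)
                    \<and> T \<inter> f T = {} \<and> I \<subseteq> T \<union> f T))"
proof -
  have A1: "\<forall>T \<in> subsets_le P (real (card P) / (2 * real d + 1)). snd (run m T P) \<in> subsets_le P (real m)"
    using run_snd[where m=m and A=P] by (simp add: subsets_le_def)
  have A2: "\<exists>T. T \<subseteq> I \<and> real (card T) \<le> real (card P) / (2 * real d + 1)
                    \<and> T \<inter> snd (run m T P) = {} \<and> I \<subseteq> T \<union> snd (run m T P)"
    if I: "I \<subseteq> P \<and> antichain I" for I
  proof -
  define T where "T = fst (run m I P)"
  have TI: "T \<subseteq> I" "T \<subseteq> P" using run_fst[where m=m and J=I and A=P] unfolding T_def by auto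
  have fT: "snd (run m T P) = snd (run m I P)"
    using run_guide[where m=m and J=I and A=P] TI unfolding T_def by blast
  have sz: "card T * (2*d+1) \<le> card P" using run_size[OF assms(3) assms(5), where A=P and J=I] unfolding T_def by simp
  have "real (card T) * (2 * real d + 1) \<le> real (card P)"
    using sz by (metis of_nat_le_iff of_nat_mult of_nat_add of_nat_1 of_nat_mult mult_2 of_nat_add)
  then have szr: "real (card T) \<le> real (card P) / (2 * real d + 1)"
    by (simp add: field_simps)
  show ?thesis
  proof (intro exI conjI)
    show "T \<subseteq> I" by (rule TI(1))
    show "real (card T) \<le> real (card P) / (2 * real d + 1)" by (rule szr)
    show "T \<inter> snd (run m T P) = {}" using run_disj[where m=m and J=I and A=P] fT unfolding T_def by simp
    show "I \<subseteq> T \<union> snd (run m T P)" using run_cover[where m=m and J=I and A=P] I fT unfolding T_def by auto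
  qed
  qed
  show ?thesis
    apply (rule exI[of _ "\<lambda>T. snd (run m T P)"])
    apply (rule conjI)
     apply (rule A1)
    apply (intro allI impI)
    apply (rule A2)
    apply assumption
    done
qed

end
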